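(* Let $G=S_4$ act on a complex abelian variety $A$. Let $H=\langle(34),(243)\rangle\cong S_3$, and let $V$ be the standard $3$-dimensional irreducible representation of $S_4$. Put $q_2=\frac16\sum_{y\in S_4\setminus H}y$. Then $$A_{H,\widetilde V}=\{z\in A_H:\ q_2(z)=-z\}_0=P(A_{H}/A_{S_4}).$$
   Context: The standard representation $V$ has character values $\chi_V(1)=3$, $\chi_V=1$ on transpositions, $-1$ on double transpositions, $0$ on $3$-cycles, and $-1$ on $4$-cycles. The action of $G$ induces $\mathbb{Q}[G]\to\mathrm{End}_\mathbb{Q}(A)$. For $\alpha\in\mathrm{End}_\mathbb{Q}(A)$, $\mathrm{Im}(\alpha):=\mathrm{Im}(n\alpha)$ for any positive integer $n$ with $n\alpha\in\mathrm{End}(A)$. For $K\le G$ set $p_K=\frac1{|K|}\sum_{k\in K}k$ and $A_K=\mathrm{Im}(p_K)$. Define $P(A_H/A_{S_4}):=\mathrm{Im}(p_H-p_{S_4})$, the complement of $A_{S_4}$ in $A_H$. Define $e_V:=\frac{3}{24}\sum_g\chi_V(g^{-1})g$ and $A_{H,\widetilde V}:=\mathrm{Im}(p_He_V)$. $\{\dots\}_0$ denotes the connected component containing $0$. *)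

theory Defs
  imports "HOL-Analysis.Analysis"
begin

section \<open>Complex tori C^n / Lambda and abelian varieties\<close>

text \<open>A complex abelian variety of dimension g = CARD('n) is, analytically, C^g / Lambda
 for a full lattice Lambda admitting a Riemann form (polarization).
 Lattice generated by real-linearly independent vectors b 0, ..., b (2g-1).\<close>

definition lattice_of :: "(nat \<Rightarrow> complex ^ 'n) \<Rightarrow> (complex ^ 'n) set" where
  "lattice_of b = {(\<Sum>i<2 * CARD('n). of_int (k i) *\<^sub>R b i) | k :: nat \<Rightarrow> int. True}"

definition full_lattice_basis :: "(nat \<Rightarrow> complex ^ 'n) \<Rightarrow> bool" where
  "full_lattice_basis b \<longleftrightarrow> inj_on b {..<2 * CARD('n)} \<and> independent (b ` {..<2 * CARD('n)})"

text \<open>Riemann form: real alternating form E, integral on the lattice, with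
 E(i x, i y) = E(x, y) and E(i x, x) > 0 for x \<noteq> 0.\<close>
definition riemann_form :: "(complex ^ 'n) set \<Rightarrow> (complex ^ 'n \<Rightarrow> complex ^ 'n \<Rightarrow> real) \<Rightarrow> bool" where
  "riemann_form L E \<longleftrightarrow>
     (\<forall>y. linear (\<lambda>x. E x y)) \<and> (\<forall>x y. E x y = - E y x) \<and>
     (\<forall>x y. E (\<i> *s x) (\<i> *s y) = E x y) \<and>
     (\<forall>x. x \<noteq> 0 \<longrightarrow> E (\<i> *s x) x > 0) \<and>
     (\<forall>l\<in>L. \<forall>m\<in>L. E l m \<in> \<int>)"

definition abelian_variety_lattice :: "(complex ^ 'n) set \<Rightarrow> bool" where
  "abelian_variety_lattice L \<longleftrightarrow>
     (\<exists>b. full_lattice_basis b \<and> L = lattice_of b) \<and> (\<exists>E. riemann_form L E)"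

text \<open>Points of A = C^n / L are the cosets x + L.\<close>
definition proj :: "(complex ^ 'n) set \<Rightarrow> complex ^ 'n \<Rightarrow> (complex ^ 'n) set" where
  "proj L x = (\<lambda>l. x + l) ` L"

text \<open>Quotient topology on A.\<close>
definition torus_top :: "(complex ^ 'n) set \<Rightarrow> (complex ^ 'n) set topology" where
  "torus_top L = topology (\<lambda>U. U \<subseteq> range (proj L) \<and> open (proj L -` U))"

lemma istopology_torus: "istopology (\<lambda>U. U \<subseteq> range (proj L) \<and> open (proj L -` U))"
  unfolding istopology_def
  by (auto simp: vimage_Union intro!: open_Union)

section \<open>The group S_4 and the action\<close>

definition S4 :: "(nat \<Rightarrow> nat) set" where
  "S4 = {p. p permutes {1..4}}"

text \<open>Subgroup generated by a set of permutations (closure under composition; finite group).\<close>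
inductive_set gen_perm :: "(nat \<Rightarrow> nat) set \<Rightarrow> (nat \<Rightarrow> nat) set" for S where
  gen_id: "id \<in> gen_perm S"
| gen_step: "s \<in> S \<Longrightarrow> p \<in> gen_perm S \<Longrightarrow> s \<circ> p \<in> gen_perm S"

definition tr34 :: "nat \<Rightarrow> nat" where
  "tr34 = (\<lambda>x. if x = 3 then 4 else if x = 4 then 3 else x)"

text \<open>The 3-cycle (2 4 3): 2 -> 4 -> 3 -> 2.\<close>
definition cyc243 :: "nat \<Rightarrow> nat" where
  "cyc243 = (\<lambda>x. if x = 2 then 4 else if x = 4 then 3 else if x = 3 then 2 else x)"

definition H_grp :: "(nat \<Rightarrow> nat) set" where
  "H_grp = gen_perm {tr34, cyc243}"

text \<open>Character of the standard representation: (number of fixed points) - 1.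
 This gives 3, 1, -1, 0, -1 on id, transpositions, double transpositions, 3-cycles, 4-cycles.\<close>
definition chiV :: "(nat \<Rightarrow> nat) \<Rightarrow> real" where
  "chiV g = real (card {i \<in> {1..4::nat}. g i = i}) - 1"

text \<open>An action of S_4 on A = C^n/L by automorphisms: complex matrices preserving L,
 multiplicative on S_4.\<close>
definition S4_action :: "(complex ^ 'n) set \<Rightarrow> ((nat \<Rightarrow> nat) \<Rightarrow> complex ^ 'n ^ 'n) \<Rightarrow> bool" where
  "S4_action L \<rho> \<longleftrightarrow> \<rho> id = mat 1 \<and>
     (\<forall>p\<in>S4. \<forall>q\<in>S4. \<rho> (p \<circ> q) = \<rho> p ** \<rho> q) \<and>
     (\<forall>p\<in>S4. \<forall>l\<in>L. \<rho> p *v l \<in> L)"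

text \<open>Image of the element sum_g c_g g of Q[G] in End_Q(A), as analytic representation.\<close>
definition grp_elt :: "((nat \<Rightarrow> nat) \<Rightarrow> complex ^ 'n ^ 'n) \<Rightarrow> ((nat \<Rightarrow> nat) \<Rightarrow> real) \<Rightarrow> complex ^ 'n ^ 'n" where
  "grp_elt \<rho> c = (\<Sum>g\<in>S4. c g *\<^sub>R \<rho> g)"

definition is_endo :: "(complex ^ 'n) set \<Rightarrow> complex ^ 'n ^ 'n \<Rightarrow> bool" where
  "is_endo L M \<longleftrightarrow> (\<forall>l\<in>L. M *v l \<in> L)"

text \<open>Im(alpha) := Im(n alpha) for a positive integer n with n alpha in End(A).\<close>
definition ImQ :: "(complex ^ 'n) set \<Rightarrow> complex ^ 'n ^ 'n \<Rightarrow> (complex ^ 'n) set set" where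
  "ImQ L M = (let n = (SOME n::nat. n > 0 \<and> is_endo L (real n *\<^sub>R M))
              in proj L ` range (\<lambda>x. (real n *\<^sub>R M) *v x))"

definition pK :: "((nat \<Rightarrow> nat) \<Rightarrow> complex ^ 'n ^ 'n) \<Rightarrow> (nat \<Rightarrow> nat) set \<Rightarrow> complex ^ 'n ^ 'n" where
  "pK \<rho> K = grp_elt \<rho> (\<lambda>g. if g \<in> K then 1 / real (card K) else 0)"

definition eV :: "((nat \<Rightarrow> nat) \<Rightarrow> complex ^ 'n ^ 'n) \<Rightarrow> complex ^ 'n ^ 'n" where
  "eV \<rho> = grp_elt \<rho> (\<lambda>g. 3 / 24 * chiV (inv g))"

definition q2 :: "((nat \<Rightarrow> nat) \<Rightarrow> complex ^ 'n ^ 'n) \<Rightarrow> complex ^ 'n ^ 'n" where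
  "q2 \<rho> = grp_elt \<rho> (\<lambda>g. if g \<notin> H_grp then 1 / 6 else 0)"

text \<open>{z in A_H : q2(z) = -z}: q2 acts on A_H via H-invariant lifts
 (well defined on A_H since q2 = sum over coset representatives of S4/H there).\<close>
definition q2_minus_set :: "(complex ^ 'n) set \<Rightarrow> ((nat \<Rightarrow> nat) \<Rightarrow> complex ^ 'n ^ 'n) \<Rightarrow> (complex ^ 'n) set set" where
  "q2_minus_set L \<rho> = {proj L x | x. x \<in> range (\<lambda>y. pK \<rho> H_grp *v y) \<and> q2 \<rho> *v x + x \<in> L}"

end

theory Submission
  imports Defs
begin

definition pm :: "nat \<Rightarrow> nat \<Rightarrow> nat \<Rightarrow> nat \<Rightarrow> nat \<Rightarrow> nat" where
  "pm a b c d = (\<lambda>x. if x = 1 then a else if x = 2 then b else if x = 3 then c else if x = 4 then d else x)"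
lemma pm_app [simp]: "pm a b c d 1 = a" "pm a b c d 2 = b" "pm a b c d 3 = c" "pm a b c d 4 = d"
  "pm a b c d (Suc 0) = a"
  by (auto simp: pm_def)
lemma pm_out: "x \<notin> {1,2,3,4} \<Longrightarrow> pm a b c d x = x"
  by (simp add: pm_def)
lemma pm_comp: "pm a b c d \<circ> pm a' b' c' d' = pm (pm a b c d a') (pm a b c d b') (pm a b c d c') (pm a b c d d')"
proof (rule ext)
  fix x
  show "(pm a b c d \<circ> pm a' b' c' d') x = pm (pm a b c d a') (pm a b c d b') (pm a b c d c') (pm a b c d d') x"
  proof (cases "x \<in> {1,2,3,4}")
    case True thus ?thesis by (elim insertE emptyE) simp_all
  next
    case False thus ?thesis by (simp add: pm_out)
  qed
qed
lemma pm_comp': "(\<lambda>x. pm a b c d (pm a' b' c' d' x)) = pm (pm a b c d a') (pm a b c d b') (pm a b c d c') (pm a b c d d')"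
  using pm_comp[of a b c d a' b' c' d'] by (simp add: comp_def)
lemma pm_eq [simp]: "pm a b c d = pm a' b' c' d' \<longleftrightarrow> a = a' \<and> b = b' \<and> c = c' \<and> d = d'"
  by (metis pm_app(1-4))
lemma pm_ext: "f 1 = a \<Longrightarrow> f 2 = b \<Longrightarrow> f 3 = c \<Longrightarrow> f 4 = d \<Longrightarrow> (\<And>x. x \<notin> {1,2,3,4} \<Longrightarrow> f x = x) \<Longrightarrow> f = pm a b c d"
proof (rule ext)
  fix x assume "f 1 = a" "f 2 = b" "f 3 = c" "f 4 = d" "\<And>x. x \<notin> {1,2,3,4} \<Longrightarrow> f x = x"
  thus "f x = pm a b c d x" by (cases "x \<in> {1,2,3,4}") (auto simp: pm_out)
qed
lemma id_pm: "id = pm 1 2 3 4" by (rule pm_ext) auto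
lemma tr34_pm: "tr34 = pm 1 2 4 3" by (rule pm_ext) (auto simp: tr34_def)
lemma cyc243_pm: "cyc243 = pm 1 4 2 3" by (rule pm_ext) (auto simp: cyc243_def)
lemma four_eq: "{1..4::nat} = {1,2,3,4}" by code_simp

definition S24 where "S24 = {pm 1 2 3 4, pm 1 2 4 3, pm 1 3 2 4, pm 1 3 4 2, pm 1 4 2 3, pm 1 4 3 2,
              pm 2 1 3 4, pm 2 1 4 3, pm 2 3 1 4, pm 2 3 4 1, pm 2 4 1 3, pm 2 4 3 1,
              pm 3 1 2 4, pm 3 1 4 2, pm 3 2 1 4, pm 3 2 4 1, pm 3 4 1 2, pm 3 4 2 1,
              pm 4 1 2 3, pm 4 1 3 2, pm 4 2 1 3, pm 4 2 3 1, pm 4 3 1 2, pm 4 3 2 1}"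

lemma S24_aux:
  assumes "a \<in> {1,2,3,4}" "b \<in> {1,2,3,4}" "c \<in> {1,2,3,4}" "d \<in> {1,2,3,4}" "distinct [a,b,c,d::nat]"
  shows "pm a b c d \<in> S24"
  using assms
  by (simp only: insert_iff empty_iff simp_thms) (elim disjE; simp add: S24_def)

definition Hset :: "(nat \<Rightarrow> nat) set" where
  "Hset = {pm 1 2 3 4, pm 1 2 4 3, pm 1 3 2 4, pm 1 3 4 2, pm 1 4 2 3, pm 1 4 3 2}"

lemma H_eq: "H_grp = Hset"
proof
  show "H_grp \<subseteq> Hset"
  proof
    fix p assume "p \<in> H_grp"
    then show "p \<in> Hset" unfolding H_grp_def
      by induct (auto simp: Hset_def id_pm tr34_pm cyc243_pm pm_comp')
  qed
next
  have g: "tr34 \<in> {tr34, cyc243}" "cyc243 \<in> {tr34, cyc243}" by auto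
  note gs = gen_perm.gen_step[OF g(1)] gen_perm.gen_step[OF g(2)] gen_perm.gen_id
  have "id \<in> H_grp" "tr34 \<circ> id \<in> H_grp" "cyc243 \<circ> id \<in> H_grp" "cyc243 \<circ> (cyc243 \<circ> id) \<in> H_grp"
     "tr34 \<circ> (cyc243 \<circ> id) \<in> H_grp" "tr34 \<circ> (cyc243 \<circ> (cyc243 \<circ> id)) \<in> H_grp"
    unfolding H_grp_def by (intro gs)+
  then show "Hset \<subseteq> H_grp" by (simp add: Hset_def id_pm tr34_pm cyc243_pm pm_comp)
qed

lemma card_Hset: "card Hset = 6" by (simp add: Hset_def)

lemma card_sum_bool: "card {i \<in> {1..4::nat}. P i} = (if P 1 then 1 else 0) + (if P 2 then 1 else 0) + (if P 3 then 1 else 0) + (if P 4 then 1 else 0)"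
proof -
  note e = four_eq
  have "card {i \<in> {1..4::nat}. P i} = (\<Sum>i\<in>{1..4::nat}. if P i then 1 else 0)"
    using sum.inter_filter[of "{1..4::nat}" "\<lambda>_. 1::nat" P] by simp
  also have "\<dots> = (if P 1 then 1 else 0) + (if P 2 then 1 else 0) + (if P 3 then 1 else 0) + (if P 4 then 1 else 0)"
    unfolding e by simp
  finally show ?thesis .
qed

lemma chiV_pm [simp]: "chiV (pm a b c d) = (if a = 1 then 1 else 0) + (if b = 2 then 1 else 0) + (if c = 3 then 1 else 0) + (if d = 4 then 1 else 0) - 1"
  unfolding chiV_def card_sum_bool by simp

lemma pm_permutes:
  assumes "a \<in> {1,2,3,4::nat}" "b \<in> {1,2,3,4::nat}" "c \<in> {1,2,3,4::nat}" "d \<in> {1,2,3,4::nat}"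
    "1 \<in> {a,b,c,d}" "2 \<in> {a,b,c,d}" "3 \<in> {a,b,c,d}" "4 \<in> {a,b,c,d}" "distinct [a,b,c,d]"
  shows "pm a b c d \<in> S4"
  unfolding S4_def mem_Collect_eq
proof (rule bij_imp_permutes)
  note e = four_eq
  show "bij_betw (pm a b c d) {1..4} {1..4}"
  proof -
    have "pm a b c d ` {1,2,3,4} = {a,b,c,d}" by simp
    moreover have "inj_on (pm a b c d) {1,2,3,4}"
      unfolding inj_on_def using assms(9)
      by (intro ballI impI, elim insertE emptyE; simp)
    moreover have "{a,b,c,d} = {1,2,3,4::nat}"
      apply (rule equalityI)
      subgoal using assms(1-4) by (simp only: insert_subset empty_subsetI simp_thms)
      subgoal using assms(5-8) by (simp only: insert_subset empty_subsetI simp_thms)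
      done
    ultimately show ?thesis unfolding e bij_betw_def by simp
  qed
  show "x \<notin> {1..4} \<Longrightarrow> pm a b c d x = x" for x
    unfolding four_eq by (rule pm_out)
qed

lemma Hset_S4: "Hset \<subseteq> S4"
proof -
  have "pm 1 2 3 4 \<in> S4" "pm 1 2 4 3 \<in> S4" "pm 1 3 2 4 \<in> S4" "pm 1 3 4 2 \<in> S4" "pm 1 4 2 3 \<in> S4" "pm 1 4 3 2 \<in> S4"
    by (rule pm_permutes; simp)+
  thus ?thesis unfolding Hset_def by simp
qed

lemma S4_cases:
  assumes "p \<in> S4"
  shows "p \<in> S24"
proof -
  have pp: "p permutes {1..4}" using assms by (simp add: S4_def)
  have e: "p = pm (p 1) (p 2) (p 3) (p 4)"
    by (rule pm_ext) (auto intro: permutes_not_in[OF pp] simp: four_eq)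
  have "p i \<in> {1,2,3,4}" if "i \<in> {1..4}" for i
    using permutes_in_image[OF pp] that unfolding four_eq by blast
  hence v: "p 1 \<in> {1,2,3,4}" "p 2 \<in> {1,2,3,4}" "p 3 \<in> {1,2,3,4}" "p 4 \<in> {1,2,3,4}" unfolding four_eq by simp_all
  moreover have "distinct [p 1, p 2, p 3, p 4]"
    using permutes_inj[OF pp] by (simp add: inj_eq)
  ultimately show ?thesis
    by (subst e) (rule S24_aux)
qed




lemma finite_S4: "finite S4"
  unfolding S4_def by (rule finite_permutations) simp

lemma card_S4: "card S4 = 24"
proof -
  have "card S4 = fact 4" unfolding S4_def by (rule card_permutations) simp_all
  also have "(fact 4 :: nat) = 24" by code_simp
  finally show ?thesis .
qed

lemma S4_comp: "p \<in> S4 \<Longrightarrow> q \<in> S4 \<Longrightarrow> p \<circ> q \<in> S4"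
  unfolding S4_def by (auto intro: permutes_compose)

lemma S4_inv: "p \<in> S4 \<Longrightarrow> inv p \<in> S4"
  unfolding S4_def by (auto intro: permutes_inv)

lemma S4_inv_o: "p \<in> S4 \<Longrightarrow> p \<circ> inv p = id" "p \<in> S4 \<Longrightarrow> inv p \<circ> p = id"
  unfolding S4_def by (auto intro: permutes_inv_o)

lemma matrix_add_rdistrib': "((A::'a::semiring_1^'n^'m) + B) ** C = A ** C + B ** C"
  by (vector matrix_matrix_mult_def sum.distrib distrib_right)

lemma mat_sum_left: "(A::'a::semiring_1^'n^'m) ** sum f S = (\<Sum>x\<in>S. A ** f x)"
  by (induct S rule: infinite_finite_induct) (auto simp: matrix_add_ldistrib)

lemma mat_sum_right: "sum f S ** (A::'a::semiring_1^'n^'m) = (\<Sum>x\<in>S. f x ** A)"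
  by (induct S rule: infinite_finite_induct) (auto simp: matrix_add_rdistrib')

lemma mat_scaleR_left: "((c::real) *\<^sub>R (A::complex^'n^'m)) ** B = c *\<^sub>R (A ** B)"
  by (simp add: scalar_matrix_assoc)

lemma mat_scaleR_right: "(A::complex^'n^'m) ** ((c::real) *\<^sub>R B) = c *\<^sub>R (A ** B)"
  by (simp add: matrix_scalar_ac scalar_matrix_assoc)

lemma mat_scaleR_vec: "((c::real) *\<^sub>R (A::complex^'n^'m)) *v x = c *\<^sub>R (A *v x)"
  by (simp add: matrix_vector_mult_def vec_eq_iff scaleR_sum_right)

lemma vec_mat_scaleR: "(A::complex^'n^'m) *v ((c::real) *\<^sub>R x) = c *\<^sub>R (A *v x)"
  using matrix_vector_mul_linear[of A] by (simp add: linear_iff)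

lemma grp_elt_cong: "(\<And>g. g \<in> S4 \<Longrightarrow> c g = d g) \<Longrightarrow> grp_elt \<rho> c = grp_elt \<rho> d"
  unfolding grp_elt_def by (rule sum.cong) auto

lemma grp_elt_add: "grp_elt \<rho> c + grp_elt \<rho> d = grp_elt \<rho> (\<lambda>g. c g + d g)"
  unfolding grp_elt_def by (simp add: sum.distrib scaleR_add_left)

lemma grp_elt_diff: "grp_elt \<rho> c - grp_elt \<rho> d = grp_elt \<rho> (\<lambda>g. c g - d g)"
  unfolding grp_elt_def by (simp add: sum_subtractf scaleR_diff_left)

lemma grp_elt_scale: "a *\<^sub>R grp_elt \<rho> c = grp_elt \<rho> (\<lambda>g. a * c g)"
  unfolding grp_elt_def by (simp add: scaleR_sum_right)

lemma grp_elt_sum: "finite X \<Longrightarrow> (\<Sum>x\<in>X. a x *\<^sub>R grp_elt \<rho> (f x)) = grp_elt \<rho> (\<lambda>g. \<Sum>x\<in>X. a x * f x g)"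
  unfolding grp_elt_def
  by (simp add: scaleR_sum_right scaleR_sum_left sum.swap[of _ X] flip: scaleR_scaleR)

definition cG :: "(nat \<Rightarrow> nat) \<Rightarrow> real" where "cG g = (if g \<in> S4 then 1/24 else 0)"

context
  fixes L :: "(complex ^ 'n) set" and \<rho> :: "(nat \<Rightarrow> nat) \<Rightarrow> complex ^ 'n ^ 'n"
  assumes act: "S4_action L \<rho>"
begin

lemma rho_mult: "p \<in> S4 \<Longrightarrow> q \<in> S4 \<Longrightarrow> \<rho> p ** \<rho> q = \<rho> (p \<circ> q)"
  using act unfolding S4_action_def by auto

lemma mult_left: 
  assumes g: "g \<in> S4"
  shows "\<rho> g ** grp_elt \<rho> d = grp_elt \<rho> (\<lambda>k. d (inv g \<circ> k))"
proof -
  have "\<rho> g ** grp_elt \<rho> d = (\<Sum>h\<in>S4. d h *\<^sub>R \<rho> (g \<circ> h))"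
    unfolding grp_elt_def mat_sum_left mat_scaleR_right
    by (rule sum.cong) (auto simp: rho_mult g)
  also have "\<dots> = (\<Sum>k\<in>S4. d (inv g \<circ> k) *\<^sub>R \<rho> k)"
  proof (rule sum.reindex_bij_witness[where i = "\<lambda>k. inv g \<circ> k" and j = "\<lambda>h. g \<circ> h"])
    fix k assume "k \<in> S4"
    thus "inv g \<circ> k \<in> S4" by (intro S4_comp S4_inv g)
    show "g \<circ> (inv g \<circ> k) = k" by (simp add: o_assoc S4_inv_o g)
  next
    fix h assume "h \<in> S4"
    thus "g \<circ> h \<in> S4" by (intro S4_comp g)
    show "inv g \<circ> (g \<circ> h) = h" by (simp add: o_assoc S4_inv_o g)
    show "d (inv g \<circ> (g \<circ> h)) *\<^sub>R \<rho> (g \<circ> h) = d h *\<^sub>R \<rho> (g \<circ> h)"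
      by (simp add: o_assoc S4_inv_o g)
  qed
  finally show ?thesis unfolding grp_elt_def .
qed

lemma mult_right: 
  assumes h: "h \<in> S4"
  shows "grp_elt \<rho> c ** \<rho> h = grp_elt \<rho> (\<lambda>k. c (k \<circ> inv h))"
proof -
  have "grp_elt \<rho> c ** \<rho> h = (\<Sum>g\<in>S4. c g *\<^sub>R \<rho> (g \<circ> h))"
    unfolding grp_elt_def mat_sum_right mat_scaleR_left
    by (rule sum.cong) (auto simp: rho_mult h)
  also have "\<dots> = (\<Sum>k\<in>S4. c (k \<circ> inv h) *\<^sub>R \<rho> k)"
  proof (rule sum.reindex_bij_witness[where i = "\<lambda>k. k \<circ> inv h" and j = "\<lambda>g. g \<circ> h"])
    fix k assume "k \<in> S4"
    thus "k \<circ> inv h \<in> S4" by (intro S4_comp S4_inv h)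
    show "k \<circ> inv h \<circ> h = k" by (simp add: o_assoc[symmetric] S4_inv_o h)
  next
    fix g assume "g \<in> S4"
    thus "g \<circ> h \<in> S4" by (intro S4_comp h)
    show "g \<circ> h \<circ> inv h = g" by (simp add: o_assoc[symmetric] S4_inv_o h)
    show "c (g \<circ> h \<circ> inv h) *\<^sub>R \<rho> (g \<circ> h) = c g *\<^sub>R \<rho> (g \<circ> h)"
      by (simp add: o_assoc[symmetric] S4_inv_o h)
  qed
  finally show ?thesis unfolding grp_elt_def .
qed

lemma mult_grp: "grp_elt \<rho> c ** grp_elt \<rho> d = (\<Sum>g\<in>S4. c g *\<^sub>R (\<rho> g ** grp_elt \<rho> d))"
  unfolding grp_elt_def[of \<rho> c] mat_sum_right mat_scaleR_left ..

lemma mult_H: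
  assumes "\<And>g. g \<notin> Hset \<Longrightarrow> c g = 0"
  shows "grp_elt \<rho> c ** grp_elt \<rho> d = grp_elt \<rho> (\<lambda>k. \<Sum>g\<in>Hset. c g * d (inv g \<circ> k))"
proof -
  have "grp_elt \<rho> c ** grp_elt \<rho> d = (\<Sum>g\<in>Hset. c g *\<^sub>R (\<rho> g ** grp_elt \<rho> d))"
    unfolding mult_grp
    by (rule sum.mono_neutral_right) (auto simp: finite_S4 Hset_S4 assms)
  also have "\<dots> = (\<Sum>g\<in>Hset. c g *\<^sub>R grp_elt \<rho> (\<lambda>k. d (inv g \<circ> k)))"
    by (rule sum.cong) (use Hset_S4 mult_left in auto)
  also have "\<dots> = grp_elt \<rho> (\<lambda>k. \<Sum>g\<in>Hset. c g * d (inv g \<circ> k))"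
    by (rule grp_elt_sum) (simp add: Hset_def)
  finally show ?thesis .
qed


lemma pG_eq: "pK \<rho> S4 = grp_elt \<rho> cG"
  unfolding pK_def cG_def card_S4 by (simp only: of_nat_numeral)

lemma left_G: "g \<in> S4 \<Longrightarrow> \<rho> g ** pK \<rho> S4 = pK \<rho> S4"
  unfolding pG_eq mult_left by (rule grp_elt_cong) (auto simp: cG_def S4_comp S4_inv)

lemma right_G: "h \<in> S4 \<Longrightarrow> pK \<rho> S4 ** \<rho> h = pK \<rho> S4"
  unfolding pG_eq mult_right by (rule grp_elt_cong) (auto simp: cG_def S4_comp S4_inv)

lemma any_G: "grp_elt \<rho> c ** pK \<rho> S4 = (\<Sum>g\<in>S4. c g) *\<^sub>R pK \<rho> S4"
proof -
  have "grp_elt \<rho> c ** pK \<rho> S4 = (\<Sum>g\<in>S4. c g *\<^sub>R (\<rho> g ** pK \<rho> S4))"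
    using mult_grp[of c] pG_eq by simp
  also have "\<dots> = (\<Sum>g\<in>S4. c g *\<^sub>R pK \<rho> S4)" by (rule sum.cong) (auto simp: left_G)
  finally show ?thesis by (simp add: scaleR_sum_left)
qed

lemma G_any: "pK \<rho> S4 ** grp_elt \<rho> c = (\<Sum>g\<in>S4. c g) *\<^sub>R pK \<rho> S4"
  unfolding grp_elt_def[of \<rho> c] mat_sum_left mat_scaleR_right using right_G
  by (simp add: scaleR_sum_left)

end



lemma inv_pm_aux: "pm a b c d \<circ> pm a' b' c' d' = id \<Longrightarrow> pm a' b' c' d' \<circ> pm a b c d = id \<Longrightarrow> inv (pm a b c d) = pm a' b' c' d'"
  by (rule inv_unique_comp)

lemma inv_H [simp]:
  "inv (pm 1 2 3 4) = pm 1 2 3 4" "inv (pm 1 2 4 3) = pm 1 2 4 3" "inv (pm 1 3 2 4) = pm 1 3 2 4"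
  "inv (pm 1 3 4 2) = pm 1 4 2 3" "inv (pm 1 4 2 3) = pm 1 3 4 2" "inv (pm 1 4 3 2) = pm 1 4 3 2"
  by (rule inv_pm_aux; simp add: pm_comp id_pm)+

lemma sum_Hset: "(\<Sum>g\<in>Hset. f g) = f (pm 1 2 3 4) + f (pm 1 2 4 3) + f (pm 1 3 2 4) + f (pm 1 3 4 2) + f (pm 1 4 2 3) + f (pm 1 4 3 2)"
  by (simp add: Hset_def add.assoc)

lemmas inv_H_Suc [simp] = inv_H[unfolded One_nat_def]

definition cH :: "(nat \<Rightarrow> nat) \<Rightarrow> real" where "cH g = (if g \<in> Hset then 1/6 else 0)"

lemma S24_cases_rule:
  assumes "k \<in> S4"
  obtains "k = pm 1 2 3 4" | "k = pm 1 2 4 3" | "k = pm 1 3 2 4" | "k = pm 1 3 4 2" | "k = pm 1 4 2 3" | "k = pm 1 4 3 2"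
   | "k = pm 2 1 3 4" | "k = pm 2 1 4 3" | "k = pm 2 3 1 4" | "k = pm 2 3 4 1" | "k = pm 2 4 1 3" | "k = pm 2 4 3 1"
   | "k = pm 3 1 2 4" | "k = pm 3 1 4 2" | "k = pm 3 2 1 4" | "k = pm 3 2 4 1" | "k = pm 3 4 1 2" | "k = pm 3 4 2 1"
   | "k = pm 4 1 2 3" | "k = pm 4 1 3 2" | "k = pm 4 2 1 3" | "k = pm 4 2 3 1" | "k = pm 4 3 1 2" | "k = pm 4 3 2 1"
  using S4_cases[OF assms] unfolding S24_def by blast

lemma coefH: "k \<in> S4 \<Longrightarrow> (\<Sum>g\<in>Hset. cH g * cH (inv g \<circ> k)) = cH k"
  unfolding sum_Hset
  by (elim S24_cases_rule; simp add: pm_comp cH_def Hset_def)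

lemma coefV: "k \<in> S4 \<Longrightarrow> (\<Sum>g\<in>Hset. cH g * (3/24 * chiV (inv g \<circ> k))) = cH k - 1/24"
  unfolding sum_Hset
  by (elim S24_cases_rule; simp add: pm_comp cH_def Hset_def)




lemma chiV_inv: assumes "p \<in> S4" shows "chiV (inv p) = chiV p"
proof -
  have pp: "p permutes {1..4}" using assms by (simp add: S4_def)
  have "{i \<in> {1..4::nat}. inv p i = i} = {i \<in> {1..4::nat}. p i = i}"
    using permutes_inv_eq[OF pp] by auto
  thus ?thesis unfolding chiV_def by simp
qed

lemma sum_cH: "(\<Sum>g\<in>S4. cH g) = 1"
proof -
  have "(\<Sum>g\<in>S4. cH g) = (\<Sum>g\<in>Hset. 1/6)"
    unfolding cH_def
    by (rule sum.mono_neutral_cong_right) (auto simp: finite_S4 Hset_S4)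
  thus ?thesis by (simp add: card_Hset)
qed

lemma sum_cG: "(\<Sum>g\<in>S4. cG g) = 1"
proof -
  have "(\<Sum>g\<in>S4. cG g) = (\<Sum>g\<in>S4. 1/24)" by (rule sum.cong) (simp_all add: cG_def)
  thus ?thesis by (simp add: card_S4)
qed

context
  fixes L :: "(complex ^ 'n) set" and \<rho> :: "(nat \<Rightarrow> nat) \<Rightarrow> complex ^ 'n ^ 'n"
  assumes act: "S4_action L \<rho>"
begin

lemma pH_eq: "pK \<rho> H_grp = grp_elt \<rho> cH"
  unfolding pK_def H_eq card_Hset cH_def by (simp only: of_nat_numeral)

lemma eV_eq: "eV \<rho> = grp_elt \<rho> (\<lambda>g. 3/24 * chiV g)"
  unfolding eV_def by (rule grp_elt_cong) (simp add: chiV_inv)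

lemma cH_out: "g \<notin> Hset \<Longrightarrow> cH g = 0" by (simp add: cH_def)

lemma A1: "pK \<rho> H_grp ** eV \<rho> = pK \<rho> H_grp - pK \<rho> S4"
proof -
  have "pK \<rho> H_grp ** eV \<rho> = grp_elt \<rho> (\<lambda>k. \<Sum>g\<in>Hset. cH g * (3/24 * chiV (inv g \<circ> k)))"
    unfolding pH_eq eV_eq by (rule mult_H[OF act]) (rule cH_out)
  also have "\<dots> = grp_elt \<rho> (\<lambda>k. cH k - cG k)"
    by (rule grp_elt_cong) (simp only: coefV cG_def if_True)
  finally show ?thesis unfolding pH_eq pG_eq[OF act] grp_elt_diff .
qed

lemma HH: "pK \<rho> H_grp ** pK \<rho> H_grp = pK \<rho> H_grp"
proof -
  have "pK \<rho> H_grp ** pK \<rho> H_grp = grp_elt \<rho> (\<lambda>k. \<Sum>g\<in>Hset. cH g * cH (inv g \<circ> k))"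
    unfolding pH_eq by (rule mult_H[OF act]) (rule cH_out)
  also have "\<dots> = grp_elt \<rho> cH"
    by (rule grp_elt_cong) (simp add: coefH)
  finally show ?thesis unfolding pH_eq .
qed

lemma HG: "pK \<rho> H_grp ** pK \<rho> S4 = pK \<rho> S4"
  unfolding pH_eq any_G[OF act] sum_cH by simp

lemma GH: "pK \<rho> S4 ** pK \<rho> H_grp = pK \<rho> S4"
  unfolding pH_eq G_any[OF act] sum_cH by simp

lemma GG: "pK \<rho> S4 ** pK \<rho> S4 = pK \<rho> S4"
  using G_any[OF act, of cG] unfolding pG_eq[OF act, symmetric] sum_cG by simp

lemma q2_eq: "q2 \<rho> = 4 *\<^sub>R pK \<rho> S4 - pK \<rho> H_grp"
  unfolding q2_def pH_eq pG_eq[OF act] grp_elt_scale grp_elt_diff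
  unfolding H_eq by (rule grp_elt_cong) (simp add: cG_def cH_def)

end



context
  fixes L :: "(complex ^ 'n) set"
  assumes lat: "abelian_variety_lattice L"
begin

lemma L_basis: obtains b where "full_lattice_basis b" "L = lattice_of b"
  using lat unfolding abelian_variety_lattice_def by blast

lemma L_zero: "0 \<in> L"
proof -
  obtain b where "L = lattice_of b" using L_basis by blast
  thus ?thesis unfolding lattice_of_def
    by (auto intro!: exI[of _ "\<lambda>_. 0"])
qed

lemma L_add: "x \<in> L \<Longrightarrow> y \<in> L \<Longrightarrow> x + y \<in> L"
proof -
  assume x: "x \<in> L" and y: "y \<in> L"
  obtain b where "L = lattice_of b" using L_basis by blast
  then obtain k k' where "x = (\<Sum>i<2 * CARD('n). of_int (k i) *\<^sub>R b i)" "y = (\<Sum>i<2 * CARD('n). of_int (k' i) *\<^sub>R b i)"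
    using x y unfolding lattice_of_def by blast
  hence eq: "x + y = (\<Sum>i<2 * CARD('n). of_int (k i + k' i) *\<^sub>R b i)"
    by (simp add: sum.distrib scaleR_add_left)
  have "x + y \<in> lattice_of b" unfolding lattice_of_def
    by (rule CollectI, rule exI[of _ "\<lambda>i. k i + k' i"]) (use eq in simp)
  thus ?thesis using \<open>L = lattice_of b\<close> by simp
qed

lemma L_int: "x \<in> L \<Longrightarrow> of_int z *\<^sub>R x \<in> L"
proof -
  assume x: "x \<in> L"
  obtain b where "L = lattice_of b" using L_basis by blast
  then obtain k where "x = (\<Sum>i<2 * CARD('n). of_int (k i) *\<^sub>R b i)"
    using x unfolding lattice_of_def by blast
  hence eq: "of_int z *\<^sub>R x = (\<Sum>i<2 * CARD('n). of_int (z * k i) *\<^sub>R b i)"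
    by (simp add: scaleR_sum_right)
  have "of_int z *\<^sub>R x \<in> lattice_of b" unfolding lattice_of_def
    by (rule CollectI, rule exI[of _ "\<lambda>i. z * k i"]) (use eq in simp)
  thus ?thesis using \<open>L = lattice_of b\<close> by simp
qed

lemma L_neg: "x \<in> L \<Longrightarrow> - x \<in> L"
  using L_int[of x "-1"] by simp

lemma L_diff: "x \<in> L \<Longrightarrow> y \<in> L \<Longrightarrow> x - y \<in> L"
  using L_add[of x "-y"] L_neg[of y] by simp

lemma L_nat: "x \<in> L \<Longrightarrow> real m *\<^sub>R x \<in> L"
  using L_int[of x "int m"] by simp

lemma L_sum: "finite S \<Longrightarrow> (\<And>i. i \<in> S \<Longrightarrow> f i \<in> L) \<Longrightarrow> sum f S \<in> L"
  by (induct S rule: finite_induct) (auto intro: L_add L_zero)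

lemma L_discrete: obtains \<delta> where "\<delta> > 0" "\<And>l. l \<in> L \<Longrightarrow> l \<noteq> 0 \<Longrightarrow> \<delta> \<le> norm l"
proof -
  obtain b where fb: "full_lattice_basis b" and Lb: "L = lattice_of b" using L_basis by blast
  define m where "m = 2 * CARD('n)"
  define B where "B = b ` {..<m}"
  have inj: "inj_on b {..<m}" and ind: "independent B"
    using fb unfolding full_lattice_basis_def m_def B_def by auto
  have finB: "finite B" unfolding B_def by simp
  have cardB: "card B = m" unfolding B_def using inj by (simp add: card_image)
  have "dim (UNIV :: (complex^'n) set) = m"
    unfolding m_def by (simp add: dim_UNIV)
  hence spanB: "span B = UNIV"
    using card_eq_dim[of B UNIV] ind finB cardB by (auto simp: span_UNIV)
  define r where "r j = (\<lambda>v. representation B v (b j))" for j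
  have bl: "bounded_linear (r j)" for j
    unfolding r_def by (rule bounded_linear_representation[OF ind spanB])
  obtain K where K: "\<And>j. K j > 0" "\<And>j x. norm (r j x) \<le> norm x * K j"
    using bl[THEN bounded_linear.pos_bounded] by metis
  define KK where "KK = (\<Sum>j<m. K j) + 1"
  have "0 \<le> (\<Sum>j<m. K j)" by (rule sum_nonneg) (simp add: K(1) less_imp_le)
  hence KKpos: "KK > 0" unfolding KK_def by linarith
  have Kle: "K j \<le> KK" if "j < m" for j
  proof -
    have "K j \<le> (\<Sum>j<m. K j)" using that K(1) by (intro member_le_sum) (auto simp: less_imp_le)
    thus ?thesis unfolding KK_def by simp
  qed
  have rb: "r j (b i) = (if i = j then 1 else 0)" if "i < m" "j < m" for i j
  proof -
    have "b i \<in> B" using that unfolding B_def by auto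
    hence "r j (b i) = (if b j = b i then 1 else 0)"
      unfolding r_def using real_vector.representation_basis[OF ind] by simp
    thus ?thesis using inj that by (auto simp: inj_on_def)
  qed
  show ?thesis
  proof
    show "1 / KK > 0" using KKpos by simp
    fix l assume "l \<in> L" "l \<noteq> 0"
    then obtain k where l: "l = (\<Sum>i<m. of_int (k i) *\<^sub>R b i)"
      unfolding Lb lattice_of_def m_def by blast
    have rl: "r j l = of_int (k j)" if "j < m" for j
    proof -
      have lin: "linear (r j)" using bl bounded_linear.linear by blast
      have "r j l = (\<Sum>i<m. of_int (k i) * r j (b i))"
        unfolding l by (simp add: linear_sum[OF lin] linear_scale[OF lin])
      also have "\<dots> = (\<Sum>i<m. if i = j then of_int (k i) else 0)"
        by (rule sum.cong) (auto simp: rb that)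
      also have "\<dots> = of_int (k j)" using that by simp
      finally show ?thesis .
    qed
    have "\<exists>j<m. k j \<noteq> 0"
    proof (rule ccontr)
      assume "\<not> (\<exists>j<m. k j \<noteq> 0)"
      hence "\<forall>j<m. k j = 0" by blast
      hence "l = 0" unfolding l by simp
      thus False using \<open>l \<noteq> 0\<close> by simp
    qed
    then obtain j where j: "j < m" "k j \<noteq> 0" by blast
    have "1 \<le> \<bar>real_of_int (k j)\<bar>" using j(2) by linarith
    also have "\<dots> = norm (r j l)" using rl[OF j(1)] by simp
    also have "\<dots> \<le> norm l * K j" by (rule K(2))
    also have "\<dots> \<le> norm l * KK" using Kle[OF j(1)] by (simp add: mult_left_mono)
    finally show "1 / KK \<le> norm l" using KKpos by (simp add: field_simps)
  qed
qed

end



lemma mat_sum_vec: "(sum f S :: complex^'n^'m) *v x = (\<Sum>i\<in>S. f i *v x)"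
  by (induct S rule: infinite_finite_induct) (auto simp: matrix_vector_mult_add_rdistrib)

lemma openin_torus: "openin (torus_top L) U \<longleftrightarrow> U \<subseteq> range (proj L) \<and> open (proj L -` U)"
  unfolding torus_top_def topology_inverse'[OF istopology_torus] ..

lemma topspace_torus: "topspace (torus_top L) = range (proj L)"
proof -
  have "proj L -` range (proj L) = UNIV" by auto
  hence "openin (torus_top L) (range (proj L))" unfolding openin_torus by simp
  hence "range (proj L) \<subseteq> topspace (torus_top L)" by (rule openin_subset)
  moreover have "topspace (torus_top L) \<subseteq> range (proj L)"
    unfolding topspace_def openin_torus by auto
  ultimately show ?thesis by blast
qed

lemma cont_proj: "continuous_map euclidean (torus_top L) (proj L)"
  unfolding continuous_map topspace_torus by (auto simp: openin_torus vimage_def)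

context
  fixes L :: "(complex ^ 'n) set"
  assumes lat: "abelian_variety_lattice L"
begin

lemma proj_eq: "proj L x = proj L y \<longleftrightarrow> x - y \<in> L"
proof
  assume "proj L x = proj L y"
  moreover have "x \<in> proj L x" unfolding proj_def using L_zero[OF lat] by force
  ultimately obtain l where "l \<in> L" "x = y + l" unfolding proj_def by auto
  thus "x - y \<in> L" by simp
next
  assume d: "x - y \<in> L"
  show "proj L x = proj L y"
  proof
    show "proj L x \<subseteq> proj L y"
    proof
      fix z assume "z \<in> proj L x"
      then obtain l where "l \<in> L" "z = x + l" unfolding proj_def by auto
      hence "z = y + ((x - y) + l)" "(x - y) + l \<in> L" using L_add[OF lat d] by auto
      thus "z \<in> proj L y" unfolding proj_def by blast
    qed
    show "proj L y \<subseteq> proj L x"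
    proof
      fix z assume "z \<in> proj L y"
      then obtain l where "l \<in> L" "z = y + l" unfolding proj_def by auto
      moreover have "y - x \<in> L" using L_neg[OF lat d] by simp
      ultimately have "z = x + ((y - x) + l)" "(y - x) + l \<in> L" using L_add[OF lat] by auto
      thus "z \<in> proj L x" unfolding proj_def by blast
    qed
  qed
qed

lemma open_image: assumes "open A" shows "openin (torus_top L) (proj L ` A)"
proof -
  have "proj L -` proj L ` A = (\<Union>l\<in>L. (\<lambda>a. l + a) ` A)"
  proof (intro equalityI subsetI)
    fix x assume "x \<in> proj L -` proj L ` A"
    then obtain a where "a \<in> A" "proj L x = proj L a" by auto
    hence "x - a \<in> L" by (simp add: proj_eq)
    thus "x \<in> (\<Union>l\<in>L. (\<lambda>a. l + a) ` A)" using \<open>a \<in> A\<close> by (auto intro!: bexI[of _ "x - a"] image_eqI[of _ _ a])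
  next
    fix x assume "x \<in> (\<Union>l\<in>L. (\<lambda>a. l + a) ` A)"
    then obtain l a where "l \<in> L" "a \<in> A" "x = l + a" by auto
    hence "proj L x = proj L a" by (simp add: proj_eq)
    thus "x \<in> proj L -` proj L ` A" using \<open>a \<in> A\<close> by auto
  qed
  moreover have "open (\<Union>l\<in>L. (\<lambda>a. l + a) ` A)"
    by (intro open_UN ballI open_translation assms)
  ultimately show ?thesis unfolding openin_torus by auto
qed

end



lemma mat_diff_l: "(A::'a::ring_1^'n^'m) ** (B - C) = A ** B - A ** C"
  by (vector matrix_matrix_mult_def sum_subtractf right_diff_distrib)

lemma mat_diff_r: "((A::'a::ring_1^'n^'m) - B) ** C = A ** C - B ** C"
  by (vector matrix_matrix_mult_def sum_subtractf left_diff_distrib)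

context
  fixes L :: "(complex ^ 'n) set" and \<rho> :: "(nat \<Rightarrow> nat) \<Rightarrow> complex ^ 'n ^ 'n"
  assumes lat: "abelian_variety_lattice L" and act: "S4_action L \<rho>"
begin

abbreviation "MH \<equiv> pK \<rho> H_grp"
abbreviation "MG \<equiv> pK \<rho> S4"
abbreviation "PP \<equiv> MH - MG"

lemma rho_L: "g \<in> S4 \<Longrightarrow> l \<in> L \<Longrightarrow> \<rho> g *v l \<in> L"
  using act unfolding S4_action_def by blast

lemma P_int: assumes "l \<in> L" shows "24 *\<^sub>R (PP *v l) \<in> L"
proof -
  have "PP = grp_elt \<rho> (\<lambda>g. cH g - cG g)"
    unfolding pH_eq[OF act] pG_eq[OF act] grp_elt_diff ..
  hence "24 *\<^sub>R (PP *v l) = (\<Sum>g\<in>S4. (24 * (cH g - cG g)) *\<^sub>R (\<rho> g *v l))"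
    by (simp add: grp_elt_def mat_sum_vec mat_scaleR_vec scaleR_sum_right)
  also have "\<dots> = (\<Sum>g\<in>S4. of_int (if g \<in> Hset then 3 else -1) *\<^sub>R (\<rho> g *v l))"
    by (rule sum.cong) (auto simp: cH_def cG_def)
  also have "\<dots> \<in> L"
    by (rule L_sum[OF lat finite_S4]) (intro L_int[OF lat] rho_L assms)
  finally show ?thesis .
qed

lemma PP_PP: "PP ** PP = PP"
  by (simp add: mat_diff_l mat_diff_r HH[OF act] HG[OF act] GH[OF act] GG[OF act])

lemma MH_PP: "MH ** PP = PP"
  by (simp add: mat_diff_l HH[OF act] HG[OF act])

lemma MG_PP: "MG ** PP = 0"
  by (simp add: mat_diff_l GH[OF act] GG[OF act])

lemma MH_fix: "x \<in> range (\<lambda>y. MH *v y) \<Longrightarrow> MH *v x = x"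
  by (auto simp: matrix_vector_mul_assoc HH[OF act])

lemma q2_x: "x \<in> range (\<lambda>y. MH *v y) \<Longrightarrow> q2 \<rho> *v x + x = 4 *\<^sub>R (MG *v x)"
  using MH_fix[of x] by (simp add: q2_eq[OF act] matrix_vector_mult_diff_rdistrib mat_scaleR_vec)

lemma PP_fix: "x \<in> range (\<lambda>y. PP *v y) \<Longrightarrow> PP *v x = x"
  by (auto simp: matrix_vector_mul_assoc PP_PP)


lemma comp_eq: "connected_component_of_set (subtopology (torus_top L) (q2_minus_set L \<rho>)) (proj L 0)
   = proj L ` range (\<lambda>x. PP *v x)" (is "?C = ?T")
proof -
  define W where "W = range (\<lambda>x. PP *v x)"
  define X where "X = {x. x \<in> range (\<lambda>y. MH *v y) \<and> q2 \<rho> *v x + x \<in> L}"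
  have S_eq: "q2_minus_set L \<rho> = proj L ` X" unfolding q2_minus_set_def X_def by auto
  obtain \<delta> where \<delta>: "\<delta> > 0" "\<And>l. l \<in> L \<Longrightarrow> l \<noteq> 0 \<Longrightarrow> \<delta> \<le> norm l" using L_discrete[OF lat] by blast
  have "bounded_linear (\<lambda>x. PP *v x)" by (simp add: linear_conv_bounded_linear)
  then obtain Bp where Bp: "Bp > 0" "\<And>x. norm (PP *v x) \<le> norm x * Bp"
    using bounded_linear.pos_bounded by blast
  define Bn where "Bn = 24 + 24 * Bp"
  have Bn: "Bn > 0" using Bp by (simp add: Bn_def)
  define N where "N v = 24 *\<^sub>R v - 24 *\<^sub>R (PP *v v)" for v
  have Nb: "norm (N v) \<le> norm v * Bn" for v
  proof -
    have "norm (N v) \<le> norm (24 *\<^sub>R v) + norm (24 *\<^sub>R (PP *v v))" unfolding N_def by (rule norm_triangle_ineq4)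
    also have "\<dots> = 24 * norm v + 24 * norm (PP *v v)" by simp
    also have "\<dots> \<le> 24 * norm v + 24 * (norm v * Bp)" using Bp(2)[of v] by simp
    finally show ?thesis by (simp add: Bn_def algebra_simps)
  qed
  have Nadd: "N (a + b) = N a + N b" for a b by (simp add: N_def matrix_vector_right_distrib algebra_simps)
  define \<epsilon> where "\<epsilon> = \<delta> / (2 * Bn)"
  have \<epsilon>: "\<epsilon> > 0" using \<delta> Bn by (simp add: \<epsilon>_def)
  have KL: "\<exists>w'\<in>W. \<exists>l'\<in>L. x = w' + l'"
    if x: "x \<in> X" and w: "w \<in> W" and l: "l \<in> L" and e: "norm e < 2 * \<epsilon>" and xe: "x = w + l + e" for x w l e
  proof -
    have xr: "x \<in> range (\<lambda>y. MH *v y)" and xq: "q2 \<rho> *v x + x \<in> L" using x by (auto simp: X_def)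
    have "N x = 24 *\<^sub>R (MG *v x)"
      using MH_fix[OF xr] by (simp add: N_def matrix_vector_mult_diff_rdistrib algebra_simps)
    also have "\<dots> = real 6 *\<^sub>R (4 *\<^sub>R (MG *v x))" by simp
    finally have Nx: "N x \<in> L" using L_nat[OF lat, of "4 *\<^sub>R (MG *v x)" 6] q2_x[OF xr] xq by simp
    have Nw: "N w = 0" using PP_fix[of w] w by (simp add: N_def W_def)
    have Nl: "N l \<in> L" unfolding N_def
      by (rule L_diff[OF lat]) (use L_nat[OF lat l, of 24] P_int[OF l] in simp_all)
    have "N x = N w + N l + N e" unfolding xe Nadd ..
    hence "N e = N x - N l" using Nw by simp
    hence NeL: "N e \<in> L" using L_diff[OF lat Nx Nl] by simp
    have "norm (N e) \<le> norm e * Bn" by (rule Nb)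
    also have "\<dots> < 2 * \<epsilon> * Bn" using e Bn by (simp add: mult_strict_right_mono)
    also have "\<dots> = \<delta>" using Bn by (simp add: \<epsilon>_def)
    finally have "N e = 0" using \<delta>(2)[OF NeL] by force
    hence Pe: "PP *v e = e" by (simp add: N_def)
    obtain y where y: "w = PP *v y" using w unfolding W_def by auto
    have "w + e = PP *v (y + e)" by (simp add: y matrix_vector_right_distrib Pe)
    hence "w + e \<in> W" unfolding W_def by simp
    moreover have "x = (w + e) + l" using xe by (simp add: algebra_simps)
    ultimately show ?thesis using l by blast
  qed
  define inWL where "inWL x \<longleftrightarrow> (\<exists>w\<in>W. \<exists>l\<in>L. x = w + l)" for x
  define U1 where "U1 = proj L ` (\<Union>w\<in>W. ball w \<epsilon>)"
  define U2 where "U2 = proj L ` (\<Union>x\<in>{x\<in>X. \<not> inWL x}. ball x \<epsilon>)"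
  have o1: "openin (torus_top L) U1" unfolding U1_def by (rule open_image[OF lat]) (intro open_UN ballI open_ball)
  have o2: "openin (torus_top L) U2" unfolding U2_def by (rule open_image[OF lat]) (intro open_UN ballI open_ball)
  have cover: "proj L ` X \<subseteq> U1 \<union> U2"
  proof
    fix z assume "z \<in> proj L ` X"
    then obtain x where x: "x \<in> X" "z = proj L x" by auto
    show "z \<in> U1 \<union> U2"
    proof (cases "inWL x")
      case True
      then obtain w l where wl: "w \<in> W" "l \<in> L" "x = w + l" by (auto simp: inWL_def)
      hence "proj L x = proj L w" by (simp add: proj_eq[OF lat])
      moreover have "w \<in> (\<Union>w\<in>W. ball w \<epsilon>)" by (rule UN_I[OF wl(1)]) (simp add: \<epsilon>)
      ultimately show ?thesis unfolding U1_def using x by auto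
    next
      case False
      hence "x \<in> (\<Union>x\<in>{x\<in>X. \<not> inWL x}. ball x \<epsilon>)" using x \<epsilon> by auto
      thus ?thesis unfolding U2_def using x by auto
    qed
  qed
  have disj: "U1 \<inter> U2 = {}"
  proof (rule ccontr)
    assume "U1 \<inter> U2 \<noteq> {}"
    then obtain a v w x where a: "w \<in> W" "dist w a < \<epsilon>" and v: "x \<in> X" "\<not> inWL x" "dist x v < \<epsilon>"
      and pe: "proj L a = proj L v" unfolding U1_def U2_def by (auto simp: ball_def)
    have "a - v \<in> L" using pe proj_eq[OF lat] by simp
    hence vaL: "v - a \<in> L" using L_neg[OF lat, of "a - v"] by simp
    have "norm ((a - w) + (x - v)) \<le> norm (a - w) + norm (x - v)" by (rule norm_triangle_ineq)
    also have "\<dots> < 2 * \<epsilon>" using a(2) v(3) by (simp add: dist_norm norm_minus_commute)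
    finally have n: "norm ((a - w) + (x - v)) < 2 * \<epsilon>" .
    have "x = w + (v - a) + ((a - w) + (x - v))" by (simp add: algebra_simps)
    from KL[OF v(1) a(1) vaL n this] have "inWL x" unfolding inWL_def .
    thus False using v(2) by simp
  qed
  have U1S: "U1 \<inter> proj L ` X \<subseteq> ?T"
  proof
    fix z assume "z \<in> U1 \<inter> proj L ` X"
    then obtain a w x where a: "w \<in> W" "dist w a < \<epsilon>" "z = proj L a" and x: "x \<in> X" "z = proj L x"
      unfolding U1_def by auto
    have xa: "x - a \<in> L" using a(3) x(2) proj_eq[OF lat] by simp
    have "norm (a - w) < 2 * \<epsilon>" using a(2) \<epsilon> by (simp add: dist_norm norm_minus_commute)
    moreover have "x = w + (x - a) + (a - w)" by simp
    ultimately obtain w' l' where w': "w' \<in> W" "l' \<in> L" "x = w' + l'" using KL[OF x(1) a(1) xa] by blast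
    hence "proj L x = proj L w'" by (simp add: proj_eq[OF lat])
    thus "z \<in> ?T" using w' x(2) unfolding W_def by auto
  qed
  have p0: "proj L 0 \<in> U1"
  proof -
    have "(0::complex^'n) \<in> W" unfolding W_def by (metis matrix_vector_mult_0_right rangeI)
    hence "(0::complex^'n) \<in> (\<Union>w\<in>W. ball w \<epsilon>)" by (rule UN_I) (simp add: \<epsilon>)
    thus ?thesis unfolding U1_def by blast
  qed
  show ?thesis
  proof
    show "?C \<subseteq> ?T"
    proof
      fix z assume "z \<in> ?C"
      then obtain T' where T': "connectedin (subtopology (torus_top L) (q2_minus_set L \<rho>)) T'" "proj L 0 \<in> T'" "z \<in> T'"
        unfolding connected_component_of_set by blast
      hence T'c: "connectedin (torus_top L) T'" and T'S: "T' \<subseteq> proj L ` X"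
        unfolding connectedin_subtopology S_eq by auto
      from T'c have "\<not> (openin (torus_top L) U1 \<and> openin (torus_top L) U2 \<and> T' \<subseteq> U1 \<union> U2 \<and>
           U1 \<inter> U2 \<inter> T' = {} \<and> U1 \<inter> T' \<noteq> {} \<and> U2 \<inter> T' \<noteq> {})"
        unfolding connectedin by blast
      hence "U2 \<inter> T' = {}" using o1 o2 cover T'S disj p0 T'(2) by blast
      hence "z \<in> U1" using T'(3) T'S cover by blast
      thus "z \<in> ?T" using U1S T'S T'(3) by blast
    qed
    show "?T \<subseteq> ?C"
    proof
      fix z assume z: "z \<in> ?T"
      have "connected (range (\<lambda>x. PP *v x))"
        by (rule connected_linear_image) (simp_all add: convex_connected)
      hence "connectedin (torus_top L) ?T"
        by (intro connectedin_continuous_map_image[OF cont_proj]) simp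
      moreover have "?T \<subseteq> q2_minus_set L \<rho>"
      proof
        fix z assume "z \<in> ?T"
        then obtain y where z: "z = proj L (PP *v y)" by auto
        have "PP *v y = MH *v (PP *v y)" by (simp add: matrix_vector_mul_assoc MH_PP)
        hence r: "PP *v y \<in> range (\<lambda>y. MH *v y)" by (metis rangeI)
        have "q2 \<rho> *v (PP *v y) + PP *v y = 0" using q2_x[OF r] by (simp add: matrix_vector_mul_assoc MG_PP)
        hence "PP *v y \<in> X" using r L_zero[OF lat] by (simp add: X_def)
        thus "z \<in> q2_minus_set L \<rho>" unfolding S_eq z by simp
      qed
      moreover have "proj L 0 \<in> ?T" by (metis matrix_vector_mult_0_right rangeI image_eqI)
      ultimately show "z \<in> ?C" unfolding connected_component_of_set connectedin_subtopology using z by blast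
    qed
  qed
qed

lemma ImQ_P: "ImQ L PP = proj L ` range (\<lambda>x. PP *v x)"
proof -
  define n where "n = (SOME n::nat. n > 0 \<and> is_endo L (real n *\<^sub>R PP))"
  have ex: "\<exists>n::nat. n > 0 \<and> is_endo L (real n *\<^sub>R PP)"
    by (rule exI[of _ 24]) (simp add: is_endo_def mat_scaleR_vec P_int)
  have n: "n > 0" unfolding n_def using someI_ex[OF ex] by blast
  have "range (\<lambda>x. (real n *\<^sub>R PP) *v x) = range (\<lambda>x. PP *v x)"
  proof (intro equalityI subsetI)
    fix z assume "z \<in> range (\<lambda>x. (real n *\<^sub>R PP) *v x)"
    then obtain x where "z = (real n *\<^sub>R PP) *v x" by auto
    hence "z = PP *v (real n *\<^sub>R x)" by (simp add: mat_scaleR_vec vec_mat_scaleR)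
    thus "z \<in> range (\<lambda>x. PP *v x)" by simp
  next
    fix z assume "z \<in> range (\<lambda>x. PP *v x)"
    then obtain x where "z = PP *v x" by auto
    hence "z = (real n *\<^sub>R PP) *v ((1 / real n) *\<^sub>R x)" using n by (simp add: mat_scaleR_vec vec_mat_scaleR)
    thus "z \<in> range (\<lambda>x. (real n *\<^sub>R PP) *v x)" by blast
  qed
  thus ?thesis unfolding ImQ_def Let_def n_def[symmetric] by simp
qed

end


theorem mainTheorem11:
  fixes L :: "(complex ^ 'n) set" and \<rho> :: "(nat \<Rightarrow> nat) \<Rightarrow> complex ^ 'n ^ 'n"
  assumes "abelian_variety_lattice L"
    and "S4_action L \<rho>"
  shows "ImQ L (pK \<rho> H_grp ** eV \<rho>) =
           connected_component_of_set (subtopology (torus_top L) (q2_minus_set L \<rho>)) (proj L 0)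
       \<and> connected_component_of_set (subtopology (torus_top L) (q2_minus_set L \<rho>)) (proj L 0) =
           ImQ L (pK \<rho> H_grp - pK \<rho> S4)"
proof -
  have "ImQ L (pK \<rho> H_grp ** eV \<rho>) = ImQ L (pK \<rho> H_grp - pK \<rho> S4)"
    using A1[OF assms(2)] by simp
  thus ?thesis using comp_eq[OF assms] ImQ_P[OF assms] by simp
qed

end
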